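(* Let $w\in S_n$ be fireworks. Then the Rajchgot code $\mathrm{rajcode}(w)=(r_1,\ldots,r_n)$ satisfies $r_n=0$ and, for $i<n$, $r_i=r_{i+1}$ if $w(i)<w(i+1)$ and $r_i=r_{i+1}+1$ if $w(i)>w(i+1)$.
   Context: Permutations are written in one-line notation. The decreasing runs of $w$ are the maximal consecutive decreasing segments of the one-line notation; $w$ is fireworks if the initial elements of its decreasing runs occur in increasing order. The Rajchgot code of $w\in S_n$ is $\mathrm{rajcode}(w)=(r_1,\ldots,r_n)$, where $r_j$ is defined as follows: choose an increasing subsequence of $w(j),w(j+1),\ldots,w(n)$ containing $w(j)$ of greatest length among all such subsequences, and let $r_j$ be the number of terms of $w(j),\ldots,w(n)$ omitted to form it. *)

theory Defs
  imports Main
begin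

text \<open>Permutations of S_n are one-line notation lists w = [w(1),...,w(n)] with
  set w = {1..n} and distinct w.  Positions are 1-based: pos w i = w(i).\<close>

definition is_perm :: "nat \<Rightarrow> nat list \<Rightarrow> bool" where
  "is_perm n w \<longleftrightarrow> length w = n \<and> distinct w \<and> set w = {1..n}"

definition pos :: "nat list \<Rightarrow> nat \<Rightarrow> nat" where
  "pos w i = w ! (i - 1)"

text \<open>i is the first position of a (maximal) decreasing run.\<close>
definition run_start :: "nat list \<Rightarrow> nat \<Rightarrow> bool" where
  "run_start w i \<longleftrightarrow> 1 \<le> i \<and> i \<le> length w \<and> (i = 1 \<or> pos w (i - 1) < pos w i)"

definition fireworks :: "nat list \<Rightarrow> bool" where
  "fireworks w \<longleftrightarrow> (\<forall>i j. run_start w i \<and> run_start w j \<and> i < j \<longrightarrow> pos w i < pos w j)"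

text \<open>Sets of positions S \<subseteq> {j..n} containing j on which w is increasing,
  i.e. increasing subsequences of w(j),...,w(n) containing w(j).\<close>
definition inc_subseqs :: "nat list \<Rightarrow> nat \<Rightarrow> nat set set" where
  "inc_subseqs w j = {S. S \<subseteq> {j..length w} \<and> j \<in> S \<and>
      (\<forall>a\<in>S. \<forall>b\<in>S. a < b \<longrightarrow> pos w a < pos w b)}"

definition rajcode :: "nat list \<Rightarrow> nat \<Rightarrow> nat" where
  "rajcode w j = (length w - j + 1) - Max (card ` inc_subseqs w j)"

end

theory Submission
  imports Defs
begin

definition ascs :: "nat list \<Rightarrow> nat \<Rightarrow> nat set" where
  "ascs w j = {k. j < k \<and> k \<le> length w \<and> pos w (k-1) < pos w k}"

lemma desc_le:
  assumes "a \<le> b" "\<And>k. a < k \<Longrightarrow> k \<le> b \<Longrightarrow> \<not> pos w (k-1) < pos w k"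
  shows "pos w b \<le> pos w a"
  using assms
proof (induction b rule: dec_induct)
  case base then show ?case by simp
next
  case (step m)
  have "\<not> pos w m < pos w (Suc m)" using step.prems step.hyps by (metis diff_Suc_1 le_imp_less_Suc le_refl)
  moreover have "pos w m \<le> pos w a" using step by auto
  ultimately show ?case by linarith
qed

lemma perm_neq:
  assumes "is_perm n w" "1 \<le> a" "a < b" "b \<le> n"
  shows "pos w a \<noteq> pos w b"
  using assms unfolding is_perm_def pos_def
  by (auto simp: nth_eq_iff_index_eq)

lemma desc_lt:
  assumes "is_perm n w" "1 \<le> a" "a < b" "b \<le> n"
    "\<And>k. a < k \<Longrightarrow> k \<le> b \<Longrightarrow> \<not> pos w (k-1) < pos w k"
  shows "pos w b < pos w a"
  using desc_le[of a b w] perm_neq[OF assms(1-4)] assms by force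

lemma ascs_in_inc:
  assumes "is_perm n w" "fireworks w" "1 \<le> j" "j \<le> n"
  shows "insert j (ascs w j) \<in> inc_subseqs w j"
proof -
  have len: "length w = n" using assms(1) by (simp add: is_perm_def)
  define s where "s = Max {k. 1 \<le> k \<and> k \<le> j \<and> run_start w k}"
  have fin: "finite {k. 1 \<le> k \<and> k \<le> j \<and> run_start w k}" by simp
  have "1 \<in> {k. 1 \<le> k \<and> k \<le> j \<and> run_start w k}"
    using assms len by (simp add: run_start_def)
  hence "{k. 1 \<le> k \<and> k \<le> j \<and> run_start w k} \<noteq> {}" by blast
  hence s_in: "s \<in> {k. 1 \<le> k \<and> k \<le> j \<and> run_start w k}"
    unfolding s_def by (rule Max_in[OF fin])
  have s_max: "\<And>k. 1 \<le> k \<Longrightarrow> k \<le> j \<Longrightarrow> run_start w k \<Longrightarrow> k \<le> s"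
    unfolding s_def using fin by auto
  have nodesc: "\<not> pos w (k-1) < pos w k" if "s < k" "k \<le> j" for k
  proof
    assume "pos w (k-1) < pos w k"
    hence "run_start w k" using that assms len s_in by (auto simp: run_start_def)
    hence "k \<le> s" using s_max that s_in by auto
    thus False using that by simp
  qed
  have pj: "pos w j \<le> pos w s" using desc_le[of s j w] nodesc s_in by auto
  have rsb: "run_start w b" if "b \<in> ascs w j" for b
    using that assms len by (auto simp: ascs_def run_start_def)
  have jb: "pos w j < pos w b" if "b \<in> ascs w j" for b
  proof -
    have "s < b" using that s_in by (auto simp: ascs_def)
    hence "pos w s < pos w b" using assms(2) rsb[OF that] s_in unfolding fireworks_def by auto
    thus ?thesis using pj by simp
  qed
  show ?thesis unfolding inc_subseqs_def
  proof (intro CollectI conjI ballI impI)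
    show "insert j (ascs w j) \<subseteq> {j..length w}" using assms len by (auto simp: ascs_def)
    show "j \<in> insert j (ascs w j)" by simp
    fix a b assume ab: "a \<in> insert j (ascs w j)" "b \<in> insert j (ascs w j)" "a < b"
    show "pos w a < pos w b"
    proof (cases "a = j")
      case True
      then show ?thesis using ab jb by (auto simp: ascs_def)
    next
      case False
      hence "a \<in> ascs w j" "b \<in> ascs w j" using ab by (auto simp: ascs_def)
      then show ?thesis using assms(2) rsb ab(3) unfolding fireworks_def by blast
    qed
  qed
qed

lemma inc_card_le:
  assumes "is_perm n w" "1 \<le> j" "j \<le> n" "S \<in> inc_subseqs w j"
  shows "card S \<le> 1 + card (ascs w j)"
proof -
  have len: "length w = n" using assms(1) by (simp add: is_perm_def)
  have S: "S \<subseteq> {j..n}" "j \<in> S" "\<And>a b. a \<in> S \<Longrightarrow> b \<in> S \<Longrightarrow> a < b \<Longrightarrow> pos w a < pos w b"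
    using assms(4) len unfolding inc_subseqs_def by auto
  have finS: "finite S" using S(1) finite_subset by blast
  define f where "f b = Max {k. j < k \<and> k \<le> b \<and> pos w (k-1) < pos w k}" for b
  have ex: "\<exists>k. a < k \<and> k \<le> b \<and> pos w (k-1) < pos w k"
    if "a \<in> S" "b \<in> S" "a < b" for a b
  proof (rule ccontr)
    assume "\<not> ?thesis"
    hence "pos w b < pos w a" using desc_lt[OF assms(1), of a b] that S assms(2) by force
    thus False using S(3)[OF that] by simp
  qed
  have fin2: "finite {k. j < k \<and> k \<le> b \<and> pos w (k-1) < pos w k}" for b by simp
  have fprop: "f b \<in> {k. j < k \<and> k \<le> b \<and> pos w (k-1) < pos w k}" if "b \<in> S - {j}" for b
  proof -
    have "j < b" using that S by force
    have "\<exists>k. j < k \<and> k \<le> b \<and> pos w (k-1) < pos w k" using ex[of j b] that S(2) \<open>j < b\<close> by auto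
    hence "{k. j < k \<and> k \<le> b \<and> pos w (k-1) < pos w k} \<noteq> {}" by blast
    thus ?thesis unfolding f_def by (rule Max_in[OF fin2])
  qed
  have fge: "k \<le> f b" if "j < k" "k \<le> b" "pos w (k-1) < pos w k" for k b
    unfolding f_def using fin2 that by auto
  have inj: "inj_on f (S - {j})"
  proof (rule linorder_inj_onI)
    fix a b assume ab: "a < b" "a \<in> S - {j}" "b \<in> S - {j}"
    obtain k where k: "a < k" "k \<le> b" "pos w (k-1) < pos w k" using ex[of a b] ab by auto
    have "j < k" using k ab S by force
    hence "k \<le> f b" using fge k by blast
    moreover have "f a \<le> a" using fprop[OF ab(2)] by simp
    ultimately show "f a \<noteq> f b" using k by simp
  qed auto
  have img: "f ` (S - {j}) \<subseteq> ascs w j"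
  proof
    fix x assume "x \<in> f ` (S - {j})"
    then obtain b where b: "b \<in> S - {j}" "x = f b" by auto
    have "b \<le> n" using b S by auto
    thus "x \<in> ascs w j" using fprop[OF b(1)] b len by (auto simp: ascs_def)
  qed
  have "finite (ascs w j)" by (simp add: ascs_def)
  hence "card (S - {j}) \<le> card (ascs w j)" using card_inj_on_le[OF inj img] by simp
  moreover have "card S = card (S - {j}) + 1" using finS S(2)
    by (metis One_nat_def add.right_neutral add_Suc_right card.remove)
  ultimately show ?thesis by simp
qed

lemma max_card:
  assumes "is_perm n w" "fireworks w" "1 \<le> j" "j \<le> n"
  shows "Max (card ` inc_subseqs w j) = 1 + card (ascs w j)"
proof -
  have len: "length w = n" using assms(1) by (simp add: is_perm_def)
  have "inc_subseqs w j \<subseteq> Pow {j..n}" using len by (auto simp: inc_subseqs_def)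
  hence fin: "finite (inc_subseqs w j)" by (meson finite_Pow_iff finite_atLeastAtMost finite_subset)
  have mem: "insert j (ascs w j) \<in> inc_subseqs w j" using ascs_in_inc assms by blast
  have "card (insert j (ascs w j)) = 1 + card (ascs w j)"
    by (simp add: ascs_def)
  show ?thesis
  proof (rule Max_eqI)
    show "finite (card ` inc_subseqs w j)" using fin by simp
    show "\<And>y. y \<in> card ` inc_subseqs w j \<Longrightarrow> y \<le> 1 + card (ascs w j)"
      using inc_card_le assms by blast
    show "1 + card (ascs w j) \<in> card ` inc_subseqs w j"
      using mem \<open>card (insert j (ascs w j)) = 1 + card (ascs w j)\<close> by (metis image_eqI)
  qed
qed

lemma raj_eq:
  assumes "is_perm n w" "fireworks w" "1 \<le> j" "j \<le> n"
  shows "rajcode w j = n - j - card (ascs w j)"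
  using max_card[OF assms] assms(1) by (simp add: rajcode_def is_perm_def)

lemma ascs_bound:
  assumes "length w = n"
  shows "card (ascs w j) \<le> n - j"
proof -
  have "ascs w j \<subseteq> {j<..n}" using assms by (auto simp: ascs_def)
  thus ?thesis by (metis card_greaterThanAtMost card_mono finite_greaterThanAtMost)
qed

lemma ascs_step:
  assumes "length w = n" "i < n"
  shows "ascs w i = (if pos w i < pos w (i+1) then insert (i+1) (ascs w (i+1)) else ascs w (i+1))"
proof (cases "pos w i < pos w (i+1)")
  case True
  then show ?thesis using assms by (auto simp: ascs_def)
next
  case False
  have "k \<noteq> Suc i" if "pos w (k-1) < pos w k" for k using that False by auto
  then show ?thesis using False assms unfolding ascs_def by (auto, force+)
qed

theorem lemma3p12:
  fixes n :: nat and w :: "nat list"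
  assumes "1 \<le> n" and "is_perm n w" and "fireworks w"
  shows "rajcode w n = 0 \<and>
    (\<forall>i. 1 \<le> i \<and> i < n \<longrightarrow>
      (pos w i < pos w (i + 1) \<longrightarrow> rajcode w i = rajcode w (i + 1)) \<and>
      (pos w i > pos w (i + 1) \<longrightarrow> rajcode w i = rajcode w (i + 1) + 1))"
proof -
  have len: "length w = n" using assms(2) by (simp add: is_perm_def)
  have r0: "rajcode w n = 0" using raj_eq[OF assms(2,3) assms(1)] by simp
  have "(pos w i < pos w (i + 1) \<longrightarrow> rajcode w i = rajcode w (i + 1)) \<and>
      (pos w i > pos w (i + 1) \<longrightarrow> rajcode w i = rajcode w (i + 1) + 1)"
    if i: "1 \<le> i" "i < n" for i
  proof -
    have e1: "rajcode w i = n - i - card (ascs w i)" using raj_eq[OF assms(2,3)] i by simp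
    have e2: "rajcode w (i+1) = n - (i+1) - card (ascs w (i+1))" using raj_eq[OF assms(2,3)] i by simp
    have b: "card (ascs w (i+1)) \<le> n - (i+1)" using ascs_bound[OF len] .
    have nin: "i+1 \<notin> ascs w (i+1)" by (simp add: ascs_def)
    have fin: "finite (ascs w (i+1))" by (simp add: ascs_def)
    show ?thesis
    proof (cases "pos w i < pos w (i+1)")
      case True
      hence "card (ascs w i) = card (ascs w (i+1)) + 1" using ascs_step[OF len i(2)] nin fin by simp
      thus ?thesis using e1 e2 b True by simp
    next
      case False
      hence "card (ascs w i) = card (ascs w (i+1))" using ascs_step[OF len i(2)] by simp
      thus ?thesis using e1 e2 b False i by (simp, arith)
    qed
  qed
  thus ?thesis using r0 by blast
qed

end
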